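(* Let $G=(V,E)$ be a twinless strongly connected directed graph, and let $G^{1}=(V,E^{1})$ with $E^{1}\subseteq E$ be a strongly connected spanning subgraph of $G$ that is not twinless strongly connected. Let $(v,w)\in E\setminus E^{1}$ be an edge such that $v$ and $w$ lie in different twinless strongly connected components of $G^{1}$. If $G^{1}$ has $k$ twinless strongly connected components, then the graph $(V,E^{1}\cup\{(v,w)\})$ has fewer than $k$ twinless strongly connected components.
   Context: Directed graphs are finite. Vertices $a,b$ of a directed graph are twinless strongly connected if there exist a directed path $p$ from $a$ to $b$ and a directed path $q$ from $b$ to $a$ such that for every edge $(x,y)$ of $p$, the reverse edge $(y,x)$ does not belong to $q$. This is an equivalence relation on the vertices; its equivalence classes are the twinless strongly connected components. A directed graph is twinless strongly connected if it has exactly one twinless strongly connected component (equivalently, it has a strongly connected spanning subgraph containing no pair of antiparallel edges $(x,y),(y,x)$). *)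

theory Defs
  imports Main
begin

definition is_path :: "('a \<times> 'a) set \<Rightarrow> 'a list \<Rightarrow> 'a \<Rightarrow> 'a \<Rightarrow> bool" where
  "is_path E p a b \<longleftrightarrow> p \<noteq> [] \<and> hd p = a \<and> last p = b \<and> set (zip p (tl p)) \<subseteq> E"

definition path_edges :: "'a list \<Rightarrow> ('a \<times> 'a) set" where
  "path_edges p = set (zip p (tl p))"

definition twinless_sc :: "('a \<times> 'a) set \<Rightarrow> 'a \<Rightarrow> 'a \<Rightarrow> bool" where
  "twinless_sc E a b \<longleftrightarrow>
     (\<exists>p q. is_path E p a b \<and> is_path E q b a \<and>
            (\<forall>(x, y) \<in> path_edges p. (y, x) \<notin> path_edges q))"

definition tsc_rel :: "'a set \<Rightarrow> ('a \<times> 'a) set \<Rightarrow> ('a \<times> 'a) set" where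
  "tsc_rel V E = {(a, b). a \<in> V \<and> b \<in> V \<and> twinless_sc E a b}"

definition num_tscc :: "'a set \<Rightarrow> ('a \<times> 'a) set \<Rightarrow> nat" where
  "num_tscc V E = card (V // tsc_rel V E)"

definition twinless_strongly_connected :: "'a set \<Rightarrow> ('a \<times> 'a) set \<Rightarrow> bool" where
  "twinless_strongly_connected V E \<longleftrightarrow> num_tscc V E = 1"

definition strongly_connected :: "'a set \<Rightarrow> ('a \<times> 'a) set \<Rightarrow> bool" where
  "strongly_connected V E \<longleftrightarrow> (\<forall>a\<in>V. \<forall>b\<in>V. (a, b) \<in> E\<^sup>*)"

end

theory Submission
  imports Defs
begin

definition tf :: "('a \<times> 'a) set \<Rightarrow> bool" where
  "tf F \<longleftrightarrow> (\<forall>x y. (x,y) \<in> F \<longrightarrow> (y,x) \<notin> F)"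

definition RR :: "('a \<times> 'a) set \<Rightarrow> 'a \<Rightarrow> 'a \<Rightarrow> bool" where
  "RR E a b \<longleftrightarrow> (\<exists>F\<subseteq>E. tf F \<and> (a,b) \<in> F\<^sup>* \<and> (b,a) \<in> F\<^sup>*)"

lemma pe_Cons2[simp]: "path_edges (x#y#l) = insert (x,y) (path_edges (y#l))"
  by (simp add: path_edges_def)

lemma pe_single[simp]: "path_edges [x] = {}"
  by (simp add: path_edges_def)

lemma is_path_pe: "is_path F p a b \<longleftrightarrow> p \<noteq> [] \<and> hd p = a \<and> last p = b \<and> path_edges p \<subseteq> F"
  by (simp add: is_path_def path_edges_def)

lemma is_path_Cons2: "is_path F (x#y#l) a b \<longleftrightarrow> x = a \<and> (x,y) \<in> F \<and> is_path F (y#l) y b"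
  by (auto simp: is_path_pe)

lemma is_path_single: "is_path F [x] a b \<longleftrightarrow> x = a \<and> x = b"
  by (auto simp: is_path_pe)

lemma path_rtrancl: "is_path F p a b \<Longrightarrow> (a,b) \<in> F\<^sup>*"
proof (induction p arbitrary: a)
  case Nil then show ?case by (simp add: is_path_def)
next
  case (Cons x p)
  show ?case
  proof (cases p)
    case Nil then show ?thesis using Cons.prems by (auto simp: is_path_single)
  next
    case (Cons y l)
    then have "x = a" "(x,y) \<in> F" "is_path F p y b" using Cons.prems by (auto simp: is_path_Cons2)
    then show ?thesis using Cons.IH by (meson converse_rtrancl_into_rtrancl)
  qed
qed

lemma path_suffix: "is_path F (xs @ l) a b \<Longrightarrow> l \<noteq> [] \<Longrightarrow> is_path F l (hd l) b"
proof (induction xs arbitrary: a)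
  case Nil then show ?case by (simp add: is_path_def)
next
  case (Cons x xs)
  show ?case
  proof (cases "xs @ l")
    case Nil then show ?thesis using Cons by simp
  next
    case (Cons y r)
    then show ?thesis using Cons.prems Cons.IH[of y] by (simp add: is_path_Cons2)
  qed
qed

lemma rtrancl_path: "(a,b) \<in> F\<^sup>* \<Longrightarrow> \<exists>p. is_path F p a b \<and> distinct p"
proof (induction rule: converse_rtrancl_induct)
  case base
  then show ?case by (intro exI[of _ "[b]"]) (simp add: is_path_single)
next
  case (step y z)
  then obtain p where p: "is_path F p z b" "distinct p" by blast
  show ?case
  proof (cases "y \<in> set p")
    case True
    then obtain xs ys where "p = xs @ y # ys" by (meson split_list)
    then show ?thesis using p path_suffix[of F xs "y#ys" z b] by (intro exI[of _ "y#ys"]) auto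
  next
    case False
    then obtain r where "p = z # r" using p by (cases p) (auto simp: is_path_def)
    then show ?thesis using p step(1) False by (intro exI[of _ "y#p"]) (simp add: is_path_Cons2)
  qed
qed

lemma pe_set: "(u,v) \<in> path_edges l \<Longrightarrow> u \<in> set l \<and> v \<in> set l"
proof (induction l)
  case Nil then show ?case by (simp add: path_edges_def)
next
  case (Cons x l)
  then show ?case by (cases l) auto
qed

lemma distinct_tf: "distinct p \<Longrightarrow> tf (path_edges p)"
proof (induction p)
  case Nil then show ?case by (simp add: path_edges_def tf_def)
next
  case (Cons x l)
  show ?case
  proof (cases l)
    case Nil then show ?thesis by (simp add: tf_def)
  next
    case (Cons y r)
    then show ?thesis using Cons.IH Cons.prems pe_set[of x _ l] pe_set[of _ x l]
      unfolding tf_def by auto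
  qed
qed

lemma tf_Un: "tf A \<Longrightarrow> tf B \<Longrightarrow> (\<And>x y. (x,y) \<in> A \<Longrightarrow> (y,x) \<notin> B) \<Longrightarrow> tf (A \<union> B)"
  unfolding tf_def by blast

lemma tsc_RR: "twinless_sc E a b \<Longrightarrow> RR E a b"
proof -
  assume "twinless_sc E a b"
  then obtain p q where pq: "is_path E p a b" "is_path E q b a"
    "\<forall>(x, y) \<in> path_edges p. (y, x) \<notin> path_edges q" unfolding twinless_sc_def by blast
  have "is_path (path_edges p) p a b" "is_path (path_edges q) q b a" using pq(1,2) by (simp_all add: is_path_pe)
  then have "(a,b) \<in> (path_edges p)\<^sup>*" "(b,a) \<in> (path_edges q)\<^sup>*" by (simp_all add: path_rtrancl)
  then obtain p' q' where p': "is_path (path_edges p) p' a b" "distinct p'"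
    and q': "is_path (path_edges q) q' b a" "distinct q'" using rtrancl_path by metis
  have s1: "path_edges p' \<subseteq> path_edges p" "path_edges q' \<subseteq> path_edges q"
    using p'(1) q'(1) by (simp_all add: is_path_pe)
  have cross: "(y,x) \<notin> path_edges q'" if "(x,y) \<in> path_edges p'" for x y
  proof -
    have "(x,y) \<in> path_edges p" using that s1(1) by blast
    then have "(y,x) \<notin> path_edges q" using pq(3) by fast
    then show ?thesis using s1(2) by blast
  qed
  have tfF: "tf (path_edges p' \<union> path_edges q')"
    by (rule tf_Un[OF distinct_tf[OF p'(2)] distinct_tf[OF q'(2)] cross])
  have sE: "path_edges p \<subseteq> E" "path_edges q \<subseteq> E" using pq(1,2) by (simp_all add: is_path_pe)
  have FE: "path_edges p' \<union> path_edges q' \<subseteq> E" using s1 sE by blast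
  have "is_path (path_edges p' \<union> path_edges q') p' a b" "is_path (path_edges p' \<union> path_edges q') q' b a"
    using p'(1) q'(1) by (auto simp: is_path_pe)
  then have "(a,b) \<in> (path_edges p' \<union> path_edges q')\<^sup>*" "(b,a) \<in> (path_edges p' \<union> path_edges q')\<^sup>*"
    by (simp_all add: path_rtrancl)
  then show ?thesis unfolding RR_def using FE tfF by blast
qed

lemma RR_tsc: "RR E a b \<Longrightarrow> twinless_sc E a b"
proof -
  assume "RR E a b"
  then obtain F where F: "F \<subseteq> E" "tf F" "(a,b) \<in> F\<^sup>*" "(b,a) \<in> F\<^sup>*" unfolding RR_def by blast
  obtain p where p: "is_path F p a b" using rtrancl_path[OF F(3)] by blast
  obtain q where q: "is_path F q b a" using rtrancl_path[OF F(4)] by blast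
  have pe: "path_edges p \<subseteq> F" "path_edges q \<subseteq> F" using p q by (simp_all add: is_path_pe)
  have c1: "is_path E p a b" "is_path E q b a" using p q F(1) by (auto simp: is_path_pe)
  have c2: "\<forall>(x, y) \<in> path_edges p. (y, x) \<notin> path_edges q"
  proof
    fix e assume e: "e \<in> path_edges p"
    obtain x y where xy: "e = (x,y)" by (cases e)
    have "(y,x) \<notin> path_edges q"
    proof
      assume "(y,x) \<in> path_edges q"
      then have "(y,x) \<in> F" "(x,y) \<in> F" using pe e xy by auto
      then show False using F(2) unfolding tf_def by blast
    qed
    then show "case e of (x, y) \<Rightarrow> (y, x) \<notin> path_edges q" using xy by simp
  qed
  have H: "is_path E p a b \<and> is_path E q b a \<and> (\<forall>(x, y) \<in> path_edges p. (y, x) \<notin> path_edges q)"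
    using c1 c2 by simp
  show ?thesis unfolding twinless_sc_def by (rule exI[of _ p], rule exI[of _ q]) (rule H)
qed

lemma tsc_iff: "twinless_sc E a b \<longleftrightarrow> RR E a b"
proof
  assume "twinless_sc E a b" then show "RR E a b" by (rule tsc_RR)
next
  assume "RR E a b" then show "twinless_sc E a b" by (rule RR_tsc)
qed

lemma restrict_reach:
  assumes "(y,x) \<in> F\<^sup>*" "(a,y) \<in> F\<^sup>*" "(x,a) \<in> F\<^sup>*"
  shows "(y,x) \<in> (F \<inter> {z. (a,z) \<in> F\<^sup>* \<and> (z,a) \<in> F\<^sup>*} \<times> {z. (a,z) \<in> F\<^sup>* \<and> (z,a) \<in> F\<^sup>*})\<^sup>*"
  using assms
proof (induction rule: rtrancl_induct)
  case base then show ?case by simp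
next
  case (step z x')
  have "(z,a) \<in> F\<^sup>*" using step by (meson converse_rtrancl_into_rtrancl)
  moreover have "(a,z) \<in> F\<^sup>*" using step by (meson rtrancl_trans)
  moreover have "(a,x') \<in> F\<^sup>*" using step by (meson rtrancl_into_rtrancl rtrancl_trans)
  moreover have "(x',a) \<in> F\<^sup>*" using step.prems by blast
  ultimately have "(z,x') \<in> F \<inter> {z. (a,z) \<in> F\<^sup>* \<and> (z,a) \<in> F\<^sup>*} \<times> {z. (a,z) \<in> F\<^sup>* \<and> (z,a) \<in> F\<^sup>*}"
    using step.hyps(2) by blast
  moreover have "(y,z) \<in> (F \<inter> {z. (a,z) \<in> F\<^sup>* \<and> (z,a) \<in> F\<^sup>*} \<times> {z. (a,z) \<in> F\<^sup>* \<and> (z,a) \<in> F\<^sup>*})\<^sup>*"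
    using step.IH step.prems \<open>(z,a) \<in> F\<^sup>*\<close> by blast
  ultimately show ?case by (rule rtrancl.rtrancl_into_rtrancl[rotated])
qed

lemma first_hit:
  assumes "(x,y) \<in> F\<^sup>*" "y \<in> S"
  shows "\<exists>u\<in>S. (x,u) \<in> (F \<inter> (-S) \<times> UNIV)\<^sup>*"
  using assms
proof (induction rule: converse_rtrancl_induct)
  case base then show ?case by blast
next
  case (step x z)
  then obtain u where u: "u \<in> S" "(z,u) \<in> (F \<inter> (-S) \<times> UNIV)\<^sup>*" by blast
  show ?case
  proof (cases "x \<in> S")
    case True then show ?thesis by blast
  next
    case False
    then have "(x,z) \<in> F \<inter> (-S) \<times> UNIV" using step(1) by blast
    then show ?thesis using u by (meson converse_rtrancl_into_rtrancl)
  qed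
qed

lemma last_hit:
  assumes "(y,x) \<in> F\<^sup>*" "y \<in> S"
  shows "\<exists>u\<in>S. (u,x) \<in> (F \<inter> UNIV \<times> (-S))\<^sup>*"
  using assms
proof (induction rule: rtrancl_induct)
  case base then show ?case by blast
next
  case (step z x)
  then obtain u where u: "u \<in> S" "(u,z) \<in> (F \<inter> UNIV \<times> (-S))\<^sup>*" by blast
  show ?case
  proof (cases "x \<in> S")
    case True then show ?thesis by blast
  next
    case False
    then have "(z,x) \<in> F \<inter> UNIV \<times> (-S)" using step(2) by blast
    then show ?thesis using u by (meson rtrancl.rtrancl_into_rtrancl)
  qed
qed

lemma RR_trans:
  assumes "RR E a b" "RR E b c"
  shows "RR E a c"
proof -
  obtain F1 where F1: "F1 \<subseteq> E" "tf F1" "(a,b) \<in> F1\<^sup>*" "(b,a) \<in> F1\<^sup>*"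
    using assms(1) unfolding RR_def by blast
  obtain F2 where F2: "F2 \<subseteq> E" "tf F2" "(b,c) \<in> F2\<^sup>*" "(c,b) \<in> F2\<^sup>*"
    using assms(2) unfolding RR_def by blast
  define S where "S = {z. (a,z) \<in> F1\<^sup>* \<and> (z,a) \<in> F1\<^sup>*}"
  define G where "G = F1 \<inter> S \<times> S"
  have Gr1: "(y,x) \<in> G\<^sup>*" if "(y,x) \<in> F1\<^sup>*" "(a,y) \<in> F1\<^sup>*" "(x,a) \<in> F1\<^sup>*" for x y
    unfolding G_def S_def by (rule restrict_reach[OF that])
  have Gr: "(a,x) \<in> G\<^sup>* \<and> (x,a) \<in> G\<^sup>*" if "x \<in> S" for x
  proof -
    have "(a,x) \<in> F1\<^sup>*" "(x,a) \<in> F1\<^sup>*" using that unfolding S_def by blast+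
    then show ?thesis using Gr1[of x a] Gr1[of a x] by blast
  qed
  have bS: "b \<in> S" using F1 unfolding S_def by blast
  obtain u where u: "u \<in> S" "(c,u) \<in> (F2 \<inter> (-S) \<times> UNIV)\<^sup>*" using first_hit[OF F2(4) bS] by blast
  obtain u' where u': "u' \<in> S" "(u',c) \<in> (F2 \<inter> UNIV \<times> (-S))\<^sup>*" using last_hit[OF F2(3) bS] by blast
  define A where "A = F2 \<inter> (-S) \<times> UNIV"
  define B where "B = F2 \<inter> UNIV \<times> (-S)"
  define F where "F = G \<union> A \<union> B"
  have GF: "G\<^sup>* \<subseteq> F\<^sup>*" "A\<^sup>* \<subseteq> F\<^sup>*" "B\<^sup>* \<subseteq> F\<^sup>*"
    unfolding F_def by (intro rtrancl_mono; blast)+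
  have FE: "F \<subseteq> E" using F1(1) F2(1) unfolding F_def G_def A_def B_def by blast
  have tfF: "tf F" unfolding tf_def
  proof (intro allI impI notI)
    fix x y assume xy: "(x,y) \<in> F" "(y,x) \<in> F"
    show False
    proof (cases "x \<in> S \<and> y \<in> S")
      case True
      then have "(x,y) \<notin> A" "(y,x) \<notin> A" "(x,y) \<notin> B" "(y,x) \<notin> B" unfolding A_def B_def by simp_all
      then have "(x,y) \<in> G" "(y,x) \<in> G" using xy unfolding F_def by simp_all
      then have "(x,y) \<in> F1" "(y,x) \<in> F1" unfolding G_def by simp_all
      then show False using F1(2) unfolding tf_def by blast
    next
      case False
      then have "(x,y) \<notin> G" "(y,x) \<notin> G" unfolding G_def by auto
      then have "(x,y) \<in> A \<union> B" "(y,x) \<in> A \<union> B" using xy unfolding F_def by simp_all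
      then have "(x,y) \<in> F2" "(y,x) \<in> F2" unfolding A_def B_def by blast+
      then show False using F2(2) unfolding tf_def by blast
    qed
  qed
  have "(a,u') \<in> F\<^sup>*" using Gr[OF u'(1)] GF(1) by blast
  moreover have "(u',c) \<in> F\<^sup>*" using u'(2) GF(3) unfolding B_def by blast
  ultimately have ac: "(a,c) \<in> F\<^sup>*" by (meson rtrancl_trans)
  have "(u,a) \<in> F\<^sup>*" using Gr[OF u(1)] GF(1) by blast
  moreover have "(c,u) \<in> F\<^sup>*" using u(2) GF(2) unfolding A_def by blast
  ultimately have ca: "(c,a) \<in> F\<^sup>*" by (meson rtrancl_trans)
  show ?thesis unfolding RR_def using FE tfF ac ca by blast
qed

lemma tsc_rel_iff: "(x,y) \<in> tsc_rel V E \<longleftrightarrow> x \<in> V \<and> y \<in> V \<and> RR E x y"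
  by (simp add: tsc_rel_def tsc_iff)

lemma equiv_tsc: "equiv V (tsc_rel V E)"
proof -
  have r: "RR E a a" for a unfolding RR_def by (rule exI[of _ "{}"]) (simp add: tf_def)
  have s: "RR E a b \<Longrightarrow> RR E b a" for a b unfolding RR_def by blast
  have sub: "tsc_rel V E \<subseteq> V \<times> V" unfolding tsc_rel_def by blast
  have "refl_on V (tsc_rel V E)" unfolding refl_on_def
    using sub by (simp add: tsc_rel_iff r)
  moreover have "sym (tsc_rel V E)"
    by (rule symI) (simp add: tsc_rel_iff s)
  moreover have "trans (tsc_rel V E)"
  proof (rule transI)
    fix x y z assume "(x, y) \<in> tsc_rel V E" "(y, z) \<in> tsc_rel V E"
    then show "(x, z) \<in> tsc_rel V E" using RR_trans[of E x y z] by (simp add: tsc_rel_iff)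
  qed
  ultimately show ?thesis unfolding equiv_def using sub by blast
qed

lemma RR_mono: "RR E a b \<Longrightarrow> E \<subseteq> E' \<Longrightarrow> RR E' a b"
  unfolding RR_def by blast

theorem mainTheorem2:
  fixes V :: "'a set" and E E1 :: "('a \<times> 'a) set" and v w :: 'a and k :: nat
  assumes "finite V" and "E \<subseteq> V \<times> V"
    and "twinless_strongly_connected V E"
    and "E1 \<subseteq> E"
    and "strongly_connected V E1"
    and "\<not> twinless_strongly_connected V E1"
    and "(v, w) \<in> E - E1"
    and "\<not> twinless_sc E1 v w"
    and "num_tscc V E1 = k"
  shows "num_tscc V (insert (v, w) E1) < k"
proof -
  let ?R = "tsc_rel V E1" and ?R' = "tsc_rel V (insert (v,w) E1)"
  have vV: "v \<in> V" "w \<in> V" using assms(2,7) by blast+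
  have eR: "equiv V ?R" and eR': "equiv V ?R'" by (rule equiv_tsc)+
  have sub: "?R \<subseteq> ?R'"
  proof (rule subrelI)
    fix x y assume "(x,y) \<in> ?R"
    then have h: "x \<in> V" "y \<in> V" "RR E1 x y" by (simp_all add: tsc_rel_def tsc_iff)
    have "RR (insert (v,w) E1) x y" by (rule RR_mono[OF h(3) subset_insertI])
    then show "(x,y) \<in> ?R'" using h(1,2) by (simp add: tsc_rel_def tsc_iff)
  qed
  have vw: "v \<noteq> w"
  proof
    assume "v = w"
    have "RR E1 v v" unfolding RR_def by (rule exI[of _ "{}"]) (simp add: tf_def)
    then show False using assms(8) \<open>v = w\<close> tsc_iff by metis
  qed
  have wv: "(w,v) \<notin> E1"
  proof
    assume wvE: "(w,v) \<in> E1"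
    have "(v,w) \<in> E1\<^sup>*" using assms(5) vV unfolding strongly_connected_def by blast
    then obtain p where p: "is_path E1 p v w" "distinct p" using rtrancl_path by metis
    let ?F = "insert (w,v) (path_edges p)"
    have "(v,w) \<notin> path_edges p" using p assms(7) by (auto simp: is_path_pe)
    then have "tf ?F" using distinct_tf[OF p(2)] vw unfolding tf_def by auto
    moreover have "?F \<subseteq> E1" using p wvE by (auto simp: is_path_pe)
    moreover have "(v,w) \<in> ?F\<^sup>*" using p path_rtrancl[of ?F p v w] by (auto simp: is_path_pe)
    ultimately have "RR E1 v w" unfolding RR_def by blast
    then show False using assms(8) tsc_iff by metis
  qed
  have vwR': "(v,w) \<in> ?R'"
  proof -
    have "(w,v) \<in> E1\<^sup>*" using assms(5) vV unfolding strongly_connected_def by blast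
    then obtain q where q: "is_path E1 q w v" "distinct q" using rtrancl_path by metis
    let ?F = "insert (v,w) (path_edges q)"
    have "(w,v) \<notin> path_edges q" using q wv by (auto simp: is_path_pe)
    then have "tf ?F" using distinct_tf[OF q(2)] vw unfolding tf_def by auto
    moreover have "?F \<subseteq> insert (v,w) E1" using q by (auto simp: is_path_pe)
    moreover have "(w,v) \<in> ?F\<^sup>*" using q path_rtrancl[of ?F q w v] by (auto simp: is_path_pe)
    ultimately have "RR (insert (v,w) E1) v w" unfolding RR_def by blast
    then show ?thesis using vV unfolding tsc_rel_def tsc_iff by blast
  qed
  have vwR: "(v,w) \<notin> ?R" using assms(8) unfolding tsc_rel_def by blast
  define f where "f = (\<lambda>X. ?R' `` X)"
  have fcl: "f (?R `` {x}) = ?R' `` {x}" if "x \<in> V" for x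
  proof -
    have "?R `` {x} \<subseteq> ?R' `` {x}" using sub by blast
    moreover have "x \<in> ?R `` {x}" using eR that unfolding equiv_def refl_on_def by blast
    moreover have "?R' `` (?R `` {x}) \<subseteq> ?R' `` {x}"
    proof
      fix y assume "y \<in> ?R' `` (?R `` {x})"
      then obtain z where "(x,z) \<in> ?R" "(z,y) \<in> ?R'" by blast
      then have "(x,z) \<in> ?R'" "(z,y) \<in> ?R'" using sub by auto
      then show "y \<in> ?R' `` {x}" using eR' unfolding equiv_def trans_def by blast
    qed
    ultimately show ?thesis unfolding f_def by blast
  qed
  have img: "f ` (V // ?R) = V // ?R'"
    unfolding quotient_def using fcl by auto
  have fin: "finite (V // ?R)" using assms(1) by (intro finite_quotient) (auto simp: tsc_rel_def)
  have ninj: "\<not> inj_on f (V // ?R)"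
  proof
    assume "inj_on f (V // ?R)"
    moreover have "?R `` {v} \<in> V // ?R" "?R `` {w} \<in> V // ?R" using vV by (auto intro: quotientI)
    moreover have "f (?R `` {v}) = f (?R `` {w})" using fcl vV vwR' eR'
      by (simp add: equiv_class_eq_iff)
    ultimately have "?R `` {v} = ?R `` {w}" by (meson inj_onD)
    then show False using vwR eR vV by (simp add: equiv_class_eq_iff)
  qed
  have "card (f ` (V // ?R)) < card (V // ?R)"
    using fin ninj card_image_le[OF fin, of f] inj_on_iff_eq_card[OF fin, of f] by linarith
  then show ?thesis using img assms(9) unfolding num_tscc_def by simp
qed

end
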